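(* Let $n\ge 1$, $d\ge 0$, and let $p\in\mathcal H(n,d)$ be a generalized Whitney mapping. Then $N(p)\ge d(n-1)+1$.
   Context: Write $s(x)=\sum_{j=1}^n x_j$. $\mathcal J(n)$ is the set of real polynomials $p\in\mathbb R[x_1,\dots,x_n]$ with $p=1$ on the hyperplane $\{s=1\}$; $\mathcal P(n)$ is the set of real polynomials with all coefficients nonnegative; $\mathcal H(n)=\mathcal J(n)\cap\mathcal P(n)$, and $\mathcal H(n,d)$ is the set of elements of $\mathcal H(n)$ of total degree exactly $d$. $N(p)$ is the number of distinct monomials occurring (with nonzero coefficient) in $p$. For polynomials $g,u$ put $X_u(g)=g-u+s u$. An element $p\in\mathcal H(n,d)$ is a generalized Whitney mapping if there exist $g_0,\dots,g_d\in\mathcal H(n)$ with $g_0=1$, $g_d=p$, $\deg g_j=j$ for each $j$, and for each $j>0$, $g_j=X_{u_j}(g_{j-1})$ for some polynomial $u_j$ such that both $u_j$ and $g_{j-1}-u_j$ have nonnegative coefficients. *)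

theory Defs
  imports Complex_Main "HOL-Library.Poly_Mapping"
begin

text \<open>Real polynomials in the variables x_0, x_1, ...: finitely supported maps from
  monomials (exponent vectors, finitely supported nat => nat) to real coefficients.\<close>

type_synonym mpoly = "(nat \<Rightarrow>\<^sub>0 nat) \<Rightarrow>\<^sub>0 real"

definition var :: "nat \<Rightarrow> mpoly" where
  "var j = Poly_Mapping.single (Poly_Mapping.single j 1) 1"

text \<open>s(x) = x_1 + ... + x_n (indexed 0..n-1).\<close>
definition s_poly :: "nat \<Rightarrow> mpoly" where
  "s_poly n = (\<Sum>j<n. var j)"

definition in_vars :: "nat \<Rightarrow> mpoly \<Rightarrow> bool" where
  "in_vars n p \<longleftrightarrow> (\<forall>m \<in> Poly_Mapping.keys p. Poly_Mapping.keys m \<subseteq> {..<n})"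

definition eval_mono :: "(nat \<Rightarrow>\<^sub>0 nat) \<Rightarrow> (nat \<Rightarrow> real) \<Rightarrow> real" where
  "eval_mono m x = (\<Prod>j\<in>Poly_Mapping.keys m. x j ^ Poly_Mapping.lookup m j)"

definition eval :: "mpoly \<Rightarrow> (nat \<Rightarrow> real) \<Rightarrow> real" where
  "eval p x = (\<Sum>m\<in>Poly_Mapping.keys p. Poly_Mapping.lookup p m * eval_mono m x)"

text \<open>Total degree of a monomial and of a polynomial (degree of 0 is taken to be 0).\<close>
definition mdeg :: "(nat \<Rightarrow>\<^sub>0 nat) \<Rightarrow> nat" where
  "mdeg m = (\<Sum>j\<in>Poly_Mapping.keys m. Poly_Mapping.lookup m j)"

definition tdeg :: "mpoly \<Rightarrow> nat" where
  "tdeg p = Max (insert 0 (mdeg ` Poly_Mapping.keys p))"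

definition Nmon :: "mpoly \<Rightarrow> nat" where
  "Nmon p = card (Poly_Mapping.keys p)"

definition nonneg_coeffs :: "mpoly \<Rightarrow> bool" where
  "nonneg_coeffs p \<longleftrightarrow> (\<forall>m. Poly_Mapping.lookup p m \<ge> 0)"

definition Jset :: "nat \<Rightarrow> mpoly set" where
  "Jset n = {p. in_vars n p \<and> (\<forall>x. (\<Sum>j<n. x j) = 1 \<longrightarrow> eval p x = 1)}"

definition Hset :: "nat \<Rightarrow> mpoly set" where
  "Hset n = {p \<in> Jset n. nonneg_coeffs p}"

definition Hsetd :: "nat \<Rightarrow> nat \<Rightarrow> mpoly set" where
  "Hsetd n d = {p \<in> Hset n. tdeg p = d}"

definition Xop :: "nat \<Rightarrow> mpoly \<Rightarrow> mpoly \<Rightarrow> mpoly" where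
  "Xop n u g = g - u + s_poly n * u"

definition gen_whitney :: "nat \<Rightarrow> nat \<Rightarrow> mpoly \<Rightarrow> bool" where
  "gen_whitney n d p \<longleftrightarrow> p \<in> Hsetd n d \<and>
     (\<exists>g :: nat \<Rightarrow> mpoly. g 0 = 1 \<and> g d = p \<and>
        (\<forall>j\<le>d. g j \<in> Hset n \<and> tdeg (g j) = j) \<and>
        (\<forall>j. 0 < j \<and> j \<le> d \<longrightarrow>
           (\<exists>u. g j = Xop n u (g (j - 1)) \<and> nonneg_coeffs u \<and> nonneg_coeffs (g (j - 1) - u))))"

end

theory Submission
  imports Defs
begin

abbreviation ee :: "nat \<Rightarrow> (nat \<Rightarrow>\<^sub>0 nat)" where "ee i \<equiv> Poly_Mapping.single i 1"

lemma lookup_single_mult_gen: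
  "Poly_Mapping.lookup (Poly_Mapping.single a (1::real) * g) k = Sum_any (\<lambda>q. Poly_Mapping.lookup g q when k = a + q)"
  by (simp add: lookup_mult lookup_single when_mult Sum_any.delta)

lemma lookup_var_mult: "Poly_Mapping.lookup (var i * g) (ee i + q) = Poly_Mapping.lookup g q"
  unfolding var_def lookup_single_mult_gen
  by (simp add: when_def Sum_any.delta)

lemma lookup_var_mult_nz: "Poly_Mapping.lookup (var i * g) k \<noteq> 0 \<Longrightarrow> \<exists>q. k = ee i + q \<and> Poly_Mapping.lookup g q \<noteq> 0"
proof -
  assume a: "Poly_Mapping.lookup (var i * g) k \<noteq> 0"
  show ?thesis
  proof (cases "\<exists>q. k = ee i + q")
    case True
    then obtain q where "k = ee i + q" by blast
    then show ?thesis using a lookup_var_mult by metis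
  next
    case False
    then have "Poly_Mapping.lookup (var i * g) k = 0" unfolding var_def lookup_single_mult_gen
      by (simp add: when_def)
    then show ?thesis using a by simp
  qed
qed

lemma lookup_s_mult: "Poly_Mapping.lookup (s_poly n * g) k = (\<Sum>i<n. Poly_Mapping.lookup (var i * g) k)"
  unfolding s_poly_def by (simp add: sum_distrib_right lookup_sum)

lemma lookup_var_mult_nonneg:
  assumes "nonneg_coeffs g" shows "Poly_Mapping.lookup (var i * g) k \<ge> 0"
proof (cases "Poly_Mapping.lookup (var i * g) k = 0")
  case False
  then obtain q where "k = ee i + q" using lookup_var_mult_nz by blast
  then show ?thesis using assms lookup_var_mult unfolding nonneg_coeffs_def by metis
qed simp

lemma mdeg_sum: "finite S \<Longrightarrow> Poly_Mapping.keys m \<subseteq> S \<Longrightarrow> mdeg m = (\<Sum>j\<in>S. Poly_Mapping.lookup m j)"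
  unfolding mdeg_def by (rule sum.mono_neutral_left) (auto simp: in_keys_iff)

lemma mdeg_add: "mdeg (a + b) = mdeg a + mdeg b"
proof -
  let ?S = "Poly_Mapping.keys a \<union> Poly_Mapping.keys b"
  have "Poly_Mapping.keys (a+b) \<subseteq> ?S" by (simp add: keys_add)
  then show ?thesis
    by (simp add: mdeg_sum[of ?S] lookup_add sum.distrib)
qed

lemma mdeg_ee: "mdeg (ee i) = 1"
  unfolding mdeg_def by simp

lemma mdeg_shift: "mdeg (ee i + m) = mdeg m + 1"
  by (metis mdeg_add mdeg_ee add.commute)

lemma mdeg_shift'[simp]: "mdeg (Poly_Mapping.single i (Suc 0) + m) = Suc (mdeg m)"
  using mdeg_shift[of i m] by simp

lemma ee_inj: "ee i = ee j \<Longrightarrow> i = j"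
  by (metis lookup_single_eq lookup_single_not_eq zero_neq_one)

definition shift :: "nat \<Rightarrow> (nat \<Rightarrow>\<^sub>0 nat) set \<Rightarrow> (nat \<Rightarrow>\<^sub>0 nat) set" where
  "shift n K = (\<lambda>(i,m). ee i + m) ` ({..<n} \<times> K)"

definition bd :: "nat \<Rightarrow> (nat \<Rightarrow>\<^sub>0 nat) set \<Rightarrow> (nat \<Rightarrow>\<^sub>0 nat) set" where
  "bd n K = shift n K - K"

lemma shift_iff: "x \<in> shift n K \<longleftrightarrow> (\<exists>i m. i < n \<and> m \<in> K \<and> x = ee i + m)"
  unfolding shift_def by auto

lemma shiftI: "i < n \<Longrightarrow> m \<in> K \<Longrightarrow> ee i + m \<in> shift n K"
  unfolding shift_iff by blast

lemma shiftI'[simp]: "i < n \<Longrightarrow> m \<in> K \<Longrightarrow> Poly_Mapping.single i (Suc 0) + m \<in> shift n K"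
  using shiftI by simp

lemma finite_shift: "finite K \<Longrightarrow> finite (shift n K)"
  unfolding shift_def by simp

lemma finite_bd: "finite K \<Longrightarrow> finite (bd n K)"
  unfolding bd_def by (simp add: finite_shift)

lemma sumset:
  assumes fin: "finite T" and ne: "T \<noteq> {}" and n: "n \<ge> 1"
  shows "card (shift n T) \<ge> card T + (n - 1)"
proof -
  obtain t where t: "t \<in> T" "\<And>m. m \<in> T \<Longrightarrow> Poly_Mapping.lookup t 0 \<le> Poly_Mapping.lookup m 0"
  proof -
    define v where "v = Min ((\<lambda>m. Poly_Mapping.lookup m 0) ` T)"
    have "v \<in> (\<lambda>m. Poly_Mapping.lookup m 0) ` T" using fin ne unfolding v_def by (intro Min_in) auto
    then obtain t where "t \<in> T" "Poly_Mapping.lookup t 0 = v" by auto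
    moreover have "\<And>m. m \<in> T \<Longrightarrow> v \<le> Poly_Mapping.lookup m 0" using fin unfolding v_def by simp
    ultimately show ?thesis using that by metis
  qed
  define A where "A = (\<lambda>m. ee 0 + m) ` T"
  define B where "B = (\<lambda>i. ee i + t) ` {1..<n}"
  have cA: "card A = card T" unfolding A_def by (rule card_image) (auto simp: inj_on_def)
  have injB: "inj_on (\<lambda>i. ee i + t) {1..<n}" unfolding inj_on_def using ee_inj by (metis add_right_cancel)
  have cB: "card B = n - 1" unfolding B_def using injB by (simp add: card_image)
  have dis: "A \<inter> B = {}"
  proof -
    { fix x assume "x \<in> A" "x \<in> B"
      then obtain m i where m: "m \<in> T" "x = ee 0 + m" and i: "i \<in> {1..<n}" "x = ee i + t"
        unfolding A_def B_def by auto
      have "Poly_Mapping.lookup x 0 = 1 + Poly_Mapping.lookup m 0" using m by (simp add: lookup_add)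
      moreover have "Poly_Mapping.lookup x 0 = Poly_Mapping.lookup t 0" using i
        by (simp add: lookup_add lookup_single_not_eq)
      ultimately have False using t(2)[OF m(1)] by simp }
    then show ?thesis by blast
  qed
  have sub: "A \<union> B \<subseteq> shift n T" unfolding A_def B_def shift_iff using n t(1) by auto
  have "card (A \<union> B) = card T + (n - 1)"
    using dis cA cB fin unfolding A_def B_def by (simp add: card_Un_disjoint)
  then show ?thesis using card_mono[OF finite_shift[OF fin] sub] by simp
qed

definition Kl :: "(nat \<Rightarrow>\<^sub>0 nat) set \<Rightarrow> nat \<Rightarrow> (nat \<Rightarrow>\<^sub>0 nat) set" where
  "Kl K k = {m \<in> K. mdeg m < k}"

lemma layers:
  assumes fin: "finite K" and n: "n \<ge> 1"
    and lay: "\<And>k. k < d \<Longrightarrow> \<exists>m\<in>K. mdeg m = k"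
  shows "k \<le> d \<Longrightarrow> card (bd n (Kl K k)) \<ge> k * (n - 1) + (if k = 0 then 0 else 1)"
proof (induction k)
  case 0
  then show ?case by simp
next
  case (Suc k)
  define T where "T = {m \<in> K. mdeg m = k}"
  have finT: "finite T" using fin unfolding T_def by simp
  have neT: "T \<noteq> {}" using lay[of k] Suc.prems unfolding T_def by auto
  have finB: "finite (bd n (Kl K k))" using fin unfolding Kl_def by (simp add: finite_bd)
  have IH: "card (bd n (Kl K k)) \<ge> k * (n - 1) + (if k = 0 then 0 else 1)"
    using Suc by simp
  have KlS: "Kl K (Suc k) = Kl K k \<union> T" unfolding Kl_def T_def by auto
  have degB: "mdeg x \<le> k" if xb: "x \<in> bd n (Kl K k)" for x
  proof -
    obtain i m where "m \<in> Kl K k" "x = ee i + m" using xb unfolding bd_def by (auto simp: shift_iff)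
    then show ?thesis unfolding Kl_def by (auto simp: mdeg_shift)
  qed
  have degS: "mdeg x = Suc k" if "x \<in> shift n T" for x
    using that unfolding shift_iff T_def by (auto simp: mdeg_shift)
  have sub: "(bd n (Kl K k) - T) \<union> shift n T \<subseteq> bd n (Kl K (Suc k))"
  proof
    fix x assume x: "x \<in> (bd n (Kl K k) - T) \<union> shift n T"
    show "x \<in> bd n (Kl K (Suc k))"
    proof (cases "x \<in> shift n T")
      case True
      then have "mdeg x = Suc k" by (rule degS)
      then have "x \<notin> Kl K (Suc k)" unfolding Kl_def by simp
      moreover have "x \<in> shift n (Kl K (Suc k))" using True unfolding KlS shift_iff by blast
      ultimately show ?thesis unfolding bd_def by simp
    next
      case False
      then have x2: "x \<in> bd n (Kl K k)" "x \<notin> T" using x by auto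
      then have "x \<notin> Kl K (Suc k)" unfolding KlS bd_def by simp
      moreover have "x \<in> shift n (Kl K (Suc k))" using x2 unfolding KlS bd_def by (auto simp: shift_iff)
      ultimately show ?thesis unfolding bd_def by simp
    qed
  qed
  have dis: "(bd n (Kl K k) - T) \<inter> shift n T = {}" using degB degS by force
  have "card ((bd n (Kl K k) - T) \<union> shift n T) = card (bd n (Kl K k) - T) + card (shift n T)"
    using dis finB finT by (simp add: card_Un_disjoint finite_shift)
  moreover have "card (bd n (Kl K k) - T) \<ge> card (bd n (Kl K k)) - card T"
    by (rule diff_card_le_card_Diff[OF finT])
  moreover have "card (shift n T) \<ge> card T + (n - 1)" by (rule sumset[OF finT neT n])
  moreover have "card (bd n (Kl K (Suc k))) \<ge> card ((bd n (Kl K k) - T) \<union> shift n T)"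
    by (rule card_mono[OF _ sub]) (use fin in \<open>simp add: Kl_def finite_bd\<close>)
  moreover have "k = 0 \<Longrightarrow> card (bd n (Kl K k)) = 0" unfolding Kl_def bd_def shift_def by simp
  moreover have "card T \<ge> 1" using finT neT by (simp add: Suc_leI card_gt_0_iff)
  ultimately show ?case using IH n by (cases "k = 0") auto
qed

lemma mdeg_le_tdeg: "m \<in> Poly_Mapping.keys p \<Longrightarrow> mdeg m \<le> tdeg p"
  unfolding tdeg_def by (intro Max_ge) auto

lemma tdeg_attained:
  assumes "tdeg p = k" "k > 0" shows "\<exists>m\<in>Poly_Mapping.keys p. mdeg m = k"
proof -
  have "Max (insert 0 (mdeg ` Poly_Mapping.keys p)) \<in> insert 0 (mdeg ` Poly_Mapping.keys p)"
    by (intro Max_in) auto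
  then show ?thesis using assms unfolding tdeg_def by auto
qed

lemma keys_sub:
  assumes "nonneg_coeffs u" "nonneg_coeffs (g - u)"
  shows "Poly_Mapping.keys u \<subseteq> Poly_Mapping.keys g"
proof
  fix m assume "m \<in> Poly_Mapping.keys u"
  then have "Poly_Mapping.lookup u m > 0" using assms(1) unfolding nonneg_coeffs_def in_keys_iff
    by (metis order_le_less)
  moreover have "Poly_Mapping.lookup g m - Poly_Mapping.lookup u m \<ge> 0"
    using assms(2) unfolding nonneg_coeffs_def by (metis lookup_minus)
  ultimately show "m \<in> Poly_Mapping.keys g" unfolding in_keys_iff by simp
qed

theorem lemma2:
  fixes n d :: nat and p :: mpoly
  assumes "n \<ge> 1"
    and "gen_whitney n d p"
  shows "Nmon p \<ge> d * (n - 1) + 1"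
proof -
  from assms(2) obtain g where g0: "g 0 = 1" and gd: "g d = p"
    and gH: "\<forall>j\<le>d. g j \<in> Hset n \<and> tdeg (g j) = j"
    and gX: "\<forall>j. 0 < j \<and> j \<le> d \<longrightarrow>
           (\<exists>u. g j = Xop n u (g (j - 1)) \<and> nonneg_coeffs u \<and> nonneg_coeffs (g (j - 1) - u))"
    unfolding gen_whitney_def by blast
  from gX obtain uu where uu: "\<forall>j. 0 < j \<and> j \<le> d \<longrightarrow>
      g j = Xop n (uu j) (g (j - 1)) \<and> nonneg_coeffs (uu j) \<and> nonneg_coeffs (g (j - 1) - uu j)"
    by metis
  show ?thesis
  proof (cases "d = 0")
    case True
    then have "p = 1" using g0 gd by simp
    then show ?thesis using True unfolding Nmon_def by simp
  next
    case False
    define U where "U = (\<Sum>j\<in>{1..d}. uu j)"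
    have gk: "k \<le> d \<Longrightarrow> g k = 1 + (s_poly n - 1) * (\<Sum>j\<in>{1..k}. uu j)" for k
    proof (induction k)
      case 0
      then show ?case using g0 by simp
    next
      case (Suc k)
      have "g (Suc k) = Xop n (uu (Suc k)) (g k)" using uu Suc.prems by auto
      also have "\<dots> = g k + (s_poly n - 1) * uu (Suc k)" unfolding Xop_def by (simp add: algebra_simps)
      finally show ?case using Suc by (simp add: algebra_simps)
    qed
    have p: "p = 1 + (s_poly n - 1) * U" using gk[of d] gd unfolding U_def by simp
    have nn: "j \<in> {1..d} \<Longrightarrow> nonneg_coeffs (uu j)" for j using uu by auto
    have ksub: "j \<in> {1..d} \<Longrightarrow> Poly_Mapping.keys (uu j) \<subseteq> Poly_Mapping.keys (g (j - 1))" for j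
      using uu keys_sub by auto
    have lookU: "Poly_Mapping.lookup U m = (\<Sum>j\<in>{1..d}. Poly_Mapping.lookup (uu j) m)" for m
      unfolding U_def by (simp add: lookup_sum)
    have keysU: "m \<in> Poly_Mapping.keys U \<longleftrightarrow> (\<exists>j\<in>{1..d}. m \<in> Poly_Mapping.keys (uu j))" for m
    proof -
      have "(\<Sum>j\<in>{1..d}. Poly_Mapping.lookup (uu j) m) = 0 \<longleftrightarrow> (\<forall>j\<in>{1..d}. Poly_Mapping.lookup (uu j) m = 0)"
        by (rule sum_nonneg_eq_0_iff) (use nn in \<open>auto simp: nonneg_coeffs_def\<close>)
      then show ?thesis unfolding in_keys_iff lookU by auto
    qed
    have Unn: "nonneg_coeffs U" unfolding nonneg_coeffs_def lookU
      using nn by (auto simp: nonneg_coeffs_def intro: sum_nonneg)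
    have degK: "mdeg m < d" if mU: "m \<in> Poly_Mapping.keys U" for m
    proof -
      obtain j where j: "j \<in> {1..d}" "m \<in> Poly_Mapping.keys (uu j)" using mU keysU by blast
      then have "m \<in> Poly_Mapping.keys (g (j - 1))" using ksub by auto
      then have "mdeg m \<le> tdeg (g (j - 1))" by (rule mdeg_le_tdeg)
      also have "\<dots> = j - 1" using gH j(1) by auto
      finally show ?thesis using j(1) by auto
    qed
    have lay: "\<exists>m\<in>Poly_Mapping.keys U. mdeg m = k" if k: "k < d" for k
    proof -
      define j where "j = Suc k"
      have j: "j \<in> {1..d}" using k unfolding j_def by auto
      have "tdeg (g j) = Suc k" using gH j unfolding j_def by auto
      then obtain m where m: "m \<in> Poly_Mapping.keys (g j)" "mdeg m = Suc k"
        using tdeg_attained by blast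
      have gj: "g j = Xop n (uu j) (g k)" using uu j unfolding j_def by auto
      have "Poly_Mapping.lookup (g k) m = 0"
      proof (rule ccontr)
        assume "Poly_Mapping.lookup (g k) m \<noteq> 0"
        then have "mdeg m \<le> tdeg (g k)" by (intro mdeg_le_tdeg) (simp add: in_keys_iff)
        also have "\<dots> = k" using gH k by auto
        finally show False using m by simp
      qed
      moreover have "Poly_Mapping.lookup (uu j) m = 0"
        using \<open>Poly_Mapping.lookup (g k) m = 0\<close> ksub[OF j] unfolding j_def by (auto simp: in_keys_iff)
      ultimately have "Poly_Mapping.lookup (s_poly n * uu j) m \<noteq> 0"
        using m(1) gj unfolding Xop_def in_keys_iff by (simp add: lookup_add lookup_minus)
      then obtain i where "i < n" "Poly_Mapping.lookup (var i * uu j) m \<noteq> 0"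
        unfolding lookup_s_mult by (meson lessThan_iff sum.not_neutral_contains_not_neutral)
      then obtain q where q: "m = ee i + q" "Poly_Mapping.lookup (uu j) q \<noteq> 0"
        using lookup_var_mult_nz by blast
      have "q \<in> Poly_Mapping.keys U" using keysU j q(2) by (auto simp: in_keys_iff)
      moreover have "mdeg q = k" using m(2) q(1) mdeg_shift by simp
      ultimately show ?thesis by blast
    qed
    have bdsub: "bd n (Poly_Mapping.keys U) \<subseteq> Poly_Mapping.keys p"
    proof
      fix x assume x: "x \<in> bd n (Poly_Mapping.keys U)"
      then obtain i q where iq: "i < n" "q \<in> Poly_Mapping.keys U" "x = ee i + q"
        and xU: "x \<notin> Poly_Mapping.keys U"
        unfolding bd_def by (auto simp: shift_iff)
      have "Poly_Mapping.lookup (var i * U) x \<le> (\<Sum>i'<n. Poly_Mapping.lookup (var i' * U) x)"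
        using iq(1) by (intro member_le_sum) (auto intro: lookup_var_mult_nonneg[OF Unn])
      moreover have "Poly_Mapping.lookup (var i * U) x > 0"
        using iq Unn lookup_var_mult unfolding nonneg_coeffs_def in_keys_iff
        by (metis order_le_less)
      ultimately have pos: "Poly_Mapping.lookup (s_poly n * U) x > 0"
        unfolding lookup_s_mult by linarith
      have "p = 1 + s_poly n * U - U" using p by (simp add: algebra_simps)
      then have "Poly_Mapping.lookup p x = Poly_Mapping.lookup 1 x + Poly_Mapping.lookup (s_poly n * U) x - Poly_Mapping.lookup U x"
        by (simp add: lookup_add lookup_minus)
      moreover have "Poly_Mapping.lookup U x = 0" using xU by (simp add: in_keys_iff)
      moreover have "Poly_Mapping.lookup (1::mpoly) x \<ge> 0" by (simp add: lookup_one when_def)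
      ultimately show "x \<in> Poly_Mapping.keys p" using pos unfolding in_keys_iff by simp
    qed
    have "Kl (Poly_Mapping.keys U) d = Poly_Mapping.keys U" unfolding Kl_def using degK by auto
    then have "card (bd n (Poly_Mapping.keys U)) \<ge> d * (n - 1) + 1"
      using layers[of "Poly_Mapping.keys U" n d d] assms(1) lay False by simp
    also have "\<dots> \<le> card (Poly_Mapping.keys p)" by (rule card_mono[OF _ bdsub]) simp
    finally show ?thesis unfolding Nmon_def .
  qed
qed

end
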